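(* Consider the market and VCG mechanism described in the context, and let $\gamma>0$ be a weak-supermodularity constant of the market objective. Let $K\subseteq L$ and consider the profile $\mathcal{C}=\{c_l\}_{l\in L}$, where for $l\in K$ the function $c_l:\mathcal{X}_l\to\mathbb{R}_+$ is the true cost of bidder $l$ and for $l\notin K$ the function $c_l$ is an arbitrary fixed bid of bidder $l$ (not necessarily truthful). Assume the bidders in $K$ lose under $\mathcal{C}$, i.e. $x^*_l(\mathcal{C})=0$ for all $l\in K$. Let $\mathcal{B}_K=\{b_l\}_{l\in K}$ be any joint deviation, with each $b_l:\mathcal{X}_l\to\mathbb{R}_+$, $b_l(0)=0$, and let $\mathcal{B}=(\mathcal{C}_{-K},\mathcal{B}_K)$. Then $$\sum_{l\in K}u_l(\mathcal{B})\;\le\;\big[\gamma^{-1}-1\big]\big[J(\mathcal{C})-J(\mathcal{B})\big]\;\le\;\big[\gamma^{-1}-1\big]\big[J(\mathcal{C})-J(\mathcal{C}_{-K},\mathcal{B}^0_K)\big],$$ where $\mathcal{B}^0_K$ is the profile in which each $l\in K$ bids $b_l(x_l)=0$ for all $x_l\in\mathcal{X}_l$. (Since $u_l(\mathcal{C})=0$ for the losing bidders $l\in K$, this bounds the collective profit of the colluders $K$ from the deviation.)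
   Context: Market model. $L=\{1,\dots,|L|\}$ is a finite set of bidders and $t\ge1$ the number of types of supply. Bidder $l$ submits a bid function $b_l:\hat{\mathcal X}_l\to\mathbb{R}_+$ with $0\in\hat{\mathcal X}_l\subseteq\mathbb{R}^t_+$, $b_l(0)=0$; a bid profile is $\mathcal{B}=\{b_l\}_{l\in L}$. Fixed functions $d:\mathbb{R}^{t|L|}_+\times\mathbb{R}^p\to\mathbb{R}$ and $g:\mathbb{R}^{t|L|}_+\times\mathbb{R}^p\to\mathbb{R}^q$ are given. For $S\subseteq L$, $$J(\mathcal{B}_S)=\min\Big\{\sum_{l\in S}b_l(x_l)+d(x,y):\ x\in\textstyle\prod_{l\in L}\hat{\mathcal X}_l,\ y\in\mathbb{R}^p,\ g(x,y)\le0,\ x_l=0\ \forall l\notin S\Big\},$$ with value $+\infty$ if infeasible (minima are assumed attained when finite). Write $J(\mathcal{B})=J(\mathcal{B}_L)$ and $J(\mathcal{B}_{-K})=J(\mathcal{B}_{L\setminus K})$, $J(\mathcal{B}_{-l})=J(\mathcal{B}_{L\setminus\{l\}})$. $(x^*(\mathcal{B}),y^*(\mathcal{B}))$ denotes the minimizer for $S=L$ selected by a fixed tie-breaking rule. A mixed profile $(\mathcal{C}_{-K},\mathcal{B}_K)$ means bidders in $K$ use the functions in $\mathcal{B}_K$ and the others use those in $\mathcal{C}$. Standing assumption: for every profile considered, $J(\mathcal{B})<\infty$ and $J(\mathcal{B}_{-l})<\infty$ for every $l$. VCG mechanism (Clarke pivot): the payment to bidder $l$ is $p_l(\mathcal{B})=b_l(x^*_l(\mathcal{B}))+J(\mathcal{B}_{-l})-J(\mathcal{B})$,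 and the utility of bidder $l$ with true cost $c_l$ is $u_l(\mathcal{B})=p_l(\mathcal{B})-c_l(x^*_l(\mathcal{B}))$. Weak-supermodularity constant: $\gamma>0$ is such that for every bid profile $\mathcal{B}$ and all $K,S\subseteq L$ with $J(\mathcal{B}_{S\setminus K})<\infty$, $$\gamma\sum_{l\in K}\big[J(\mathcal{B}_{S\setminus\{l\}})-J(\mathcal{B}_S)\big]\le J(\mathcal{B}_{S\setminus K})-J(\mathcal{B}_S).$$ (The largest such $\gamma$ is the supermodularity ratio $\gamma_{\sup}$; the market objective is weakly supermodular if $\gamma_{\sup}>0$.) *)

theory Defs
  imports "HOL-Analysis.Analysis"
begin

text \<open>Bidders are the elements of a finite type 'l (so L = UNIV).
  Each bidder's allocation x_l lives in real^'t, the auxiliary variable y in real^'p,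
  and the constraint function g takes values in real^'q (g(x,y) <= 0 componentwise).
  A bid profile is a function b :: 'l => real^'t => real; only its values on X l matter.\<close>

type_synonym ('l, 't) alloc = "'l \<Rightarrow> real^'t"
type_synonym ('l, 't) profile = "'l \<Rightarrow> real^'t \<Rightarrow> real"

definition valid_domains :: "('l \<Rightarrow> (real^'t) set) \<Rightarrow> bool" where
  "valid_domains X \<longleftrightarrow> (\<forall>l. 0 \<in> X l \<and> X l \<subseteq> {v. \<forall>i. 0 \<le> v $ i})"

definition bid_profile :: "('l \<Rightarrow> (real^'t) set) \<Rightarrow> ('l, 't) profile \<Rightarrow> bool" where
  "bid_profile X b \<longleftrightarrow> (\<forall>l. b l 0 = 0 \<and> (\<forall>v\<in>X l. 0 \<le> b l v))"

definition feasible ::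
  "('l \<Rightarrow> (real^'t) set) \<Rightarrow> (('l, 't) alloc \<Rightarrow> real^'p \<Rightarrow> real^'q) \<Rightarrow> 'l set
     \<Rightarrow> ('l, 't) alloc \<Rightarrow> real^'p \<Rightarrow> bool" where
  "feasible X g S x y \<longleftrightarrow>
     (\<forall>l. x l \<in> X l) \<and> (\<forall>i. g x y $ i \<le> 0) \<and> (\<forall>l. l \<notin> S \<longrightarrow> x l = 0)"

definition objective ::
  "('l, 't) profile \<Rightarrow> (('l, 't) alloc \<Rightarrow> real^'p \<Rightarrow> real) \<Rightarrow> 'l set
     \<Rightarrow> ('l, 't) alloc \<Rightarrow> real^'p \<Rightarrow> real" where
  "objective b d S x y = (\<Sum>l\<in>S. b l (x l)) + d x y"

text \<open>J(B_S): infimum (a minimum under the attainment assumption) of the objective;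
  +infinity if infeasible.\<close>
definition Jm ::
  "('l \<Rightarrow> (real^'t) set) \<Rightarrow> (('l, 't) alloc \<Rightarrow> real^'p \<Rightarrow> real^'q)
     \<Rightarrow> (('l, 't) alloc \<Rightarrow> real^'p \<Rightarrow> real) \<Rightarrow> ('l, 't) profile \<Rightarrow> 'l set \<Rightarrow> ereal" where
  "Jm X g d b S =
     (INF xy \<in> {(x, y). feasible X g S x y}. ereal (objective b d S (fst xy) (snd xy)))"

text \<open>Real value of J (used only where J is finite).\<close>
definition Jr ::
  "('l \<Rightarrow> (real^'t) set) \<Rightarrow> (('l, 't) alloc \<Rightarrow> real^'p \<Rightarrow> real^'q)
     \<Rightarrow> (('l, 't) alloc \<Rightarrow> real^'p \<Rightarrow> real) \<Rightarrow> ('l, 't) profile \<Rightarrow> 'l set \<Rightarrow> real" where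
  "Jr X g d b S = real_of_ereal (Jm X g d b S)"

definition mixed :: "'l set \<Rightarrow> ('l, 't) profile \<Rightarrow> ('l, 't) profile \<Rightarrow> ('l, 't) profile" where
  "mixed K b c = (\<lambda>l. if l \<in> K then b l else c l)"

text \<open>VCG (Clarke pivot) payment and utility; xs is the fixed tie-breaking selection x^*(B).\<close>
definition vcg_payment ::
  "('l \<Rightarrow> (real^'t) set) \<Rightarrow> (('l, 't) alloc \<Rightarrow> real^'p \<Rightarrow> real^'q)
     \<Rightarrow> (('l, 't) alloc \<Rightarrow> real^'p \<Rightarrow> real) \<Rightarrow> (('l, 't) profile \<Rightarrow> ('l, 't) alloc)
     \<Rightarrow> ('l, 't) profile \<Rightarrow> 'l \<Rightarrow> real" where
  "vcg_payment X g d xs b l = b l (xs b l) + Jr X g d b (UNIV - {l}) - Jr X g d b UNIV"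

definition vcg_utility ::
  "('l \<Rightarrow> (real^'t) set) \<Rightarrow> (('l, 't) alloc \<Rightarrow> real^'p \<Rightarrow> real^'q)
     \<Rightarrow> (('l, 't) alloc \<Rightarrow> real^'p \<Rightarrow> real) \<Rightarrow> (('l, 't) profile \<Rightarrow> ('l, 't) alloc)
     \<Rightarrow> ('l, 't) profile \<Rightarrow> ('l, 't) profile \<Rightarrow> 'l \<Rightarrow> real" where
  "vcg_utility X g d xs b c l = vcg_payment X g d xs b l - c l (xs b l)"

definition weak_supermodular_const ::
  "('l \<Rightarrow> (real^'t) set) \<Rightarrow> (('l, 't) alloc \<Rightarrow> real^'p \<Rightarrow> real^'q)
     \<Rightarrow> (('l, 't) alloc \<Rightarrow> real^'p \<Rightarrow> real) \<Rightarrow> real \<Rightarrow> bool" where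
  "weak_supermodular_const X g d \<gamma> \<longleftrightarrow>
     (\<forall>b K S. bid_profile X b \<longrightarrow> Jm X g d b (S - K) < \<infinity> \<longrightarrow>
        ereal \<gamma> * (\<Sum>l\<in>K. Jm X g d b (S - {l}) - Jm X g d b S)
          \<le> Jm X g d b (S - K) - Jm X g d b S)"

end

theory Submission
  imports Defs
begin

lemma Jm_le: "feasible X g S x y \<Longrightarrow> Jm X g d P S \<le> ereal (objective P d S x y)"
  unfolding Jm_def by (rule INF_lower2[of "(x,y)"]) auto

lemma obj_shrink:
  assumes "bid_profile X P" "S' \<subseteq> S" "\<forall>l. l \<notin> S' \<longrightarrow> x l = 0"
  shows "objective P d (S::'l::finite set) x y = objective P d S' x (y::real^'p)"
proof -
  have "(\<Sum>l\<in>S. P l (x l)) = (\<Sum>l\<in>S'. P l (x l))"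
    by (rule sum.mono_neutral_right) (use assms in \<open>auto simp: bid_profile_def\<close>)
  then show ?thesis unfolding objective_def by simp
qed

lemma Jm_mono:
  assumes "bid_profile X P" "S' \<subseteq> (S::'l::finite set)"
  shows "Jm X g d P S \<le> Jm X g d P S'"
proof -
  have "Jm X g d P S \<le> ereal (objective P d S' x y)" if "feasible X g S' x y" for x y
  proof -
    have f: "feasible X g S x y" using that assms(2) unfolding feasible_def by auto
    have "objective P d S x y = objective P d S' x y"
      by (rule obj_shrink) (use assms that in \<open>auto simp: feasible_def\<close>)
    with Jm_le[OF f, where P=P and d=d] show ?thesis by simp
  qed
  then show ?thesis unfolding Jm_def[of X g d P S'] by (auto intro!: INF_greatest)
qed

lemma Jm_cong_outside:
  assumes "\<forall>l. l \<notin> K \<longrightarrow> P l = Q l"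
  shows "Jm X g d P (UNIV - K) = Jm X g d Q (UNIV - K)"
proof -
  have "objective P d (UNIV - K) x y = objective Q d (UNIV - K) x y" for x y
    unfolding objective_def using assms by (auto intro!: sum.cong)
  then show ?thesis unfolding Jm_def by simp
qed


theorem theorem1:
  fixes X :: "'l::finite \<Rightarrow> (real^'t) set"
    and g :: "('l, 't) alloc \<Rightarrow> real^'p \<Rightarrow> real^'q"
    and d :: "('l, 't) alloc \<Rightarrow> real^'p \<Rightarrow> real"
    and xs :: "('l, 't) profile \<Rightarrow> ('l, 't) alloc"
    and ys :: "('l, 't) profile \<Rightarrow> real^'p"
    and \<gamma> :: real
    and K :: "'l set"
    and c b :: "('l, 't) profile"
  assumes domains: "valid_domains X"
    and attained: "\<forall>bp S. bid_profile X bp \<and> Jm X g d bp S < \<infinity> \<longrightarrow>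
        (\<exists>x y. feasible X g S x y \<and> ereal (objective bp d S x y) = Jm X g d bp S)"
    and tie_breaking: "\<forall>bp. bid_profile X bp \<and> Jm X g d bp UNIV < \<infinity> \<longrightarrow>
        feasible X g UNIV (xs bp) (ys bp) \<and>
        ereal (objective bp d UNIV (xs bp) (ys bp)) = Jm X g d bp UNIV"
    and gamma_pos: "\<gamma> > 0"
    and wsm: "weak_supermodular_const X g d \<gamma>"
    and C_profile: "bid_profile X c"
    and B_bids: "\<forall>l\<in>K. b l 0 = 0 \<and> (\<forall>v\<in>X l. 0 \<le> b l v)"
    and losers: "\<forall>l\<in>K. xs c l = 0"
    and standing: "\<forall>P\<in>{c, mixed K b c, mixed K (\<lambda>_ _. 0) c}.
        Jm X g d P UNIV < \<infinity> \<and> (\<forall>l. Jm X g d P (UNIV - {l}) < \<infinity>)"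
  shows "(\<Sum>l\<in>K. vcg_utility X g d xs (mixed K b c) c l)
           \<le> (1 / \<gamma> - 1) * (Jr X g d c UNIV - Jr X g d (mixed K b c) UNIV)
       \<and> (1 / \<gamma> - 1) * (Jr X g d c UNIV - Jr X g d (mixed K b c) UNIV)
           \<le> (1 / \<gamma> - 1) * (Jr X g d c UNIV - Jr X g d (mixed K (\<lambda>_ _. 0) c) UNIV)"
proof -
  define B where "B = mixed K b c"
  define Z where "Z = mixed K (\<lambda>_ _. 0::real) c"
  let ?J = "Jm X g d"
  let ?R = "Jr X g d"
  have cb: "\<forall>l. c l 0 = 0 \<and> (\<forall>v\<in>X l. 0 \<le> c l v)" using C_profile unfolding bid_profile_def by auto
  have bpB: "bid_profile X B" using cb B_bids unfolding B_def bid_profile_def mixed_def by auto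
  have bpZ: "bid_profile X Z" using cb unfolding Z_def bid_profile_def mixed_def by auto
  have fin: "?J P S = ereal (?R P S)" if h: "bid_profile X P" "?J P S < \<infinity>" for P S
  proof -
    obtain x y where "feasible X g S x y" "ereal (objective P d S x y) = ?J P S"
      using attained h by blast
    then show ?thesis unfolding Jr_def by (metis real_of_ereal.simps(1))
  qed
  have stC: "?J c UNIV < \<infinity>" and stB: "?J B UNIV < \<infinity>" "\<And>l. ?J B (UNIV - {l}) < \<infinity>"
    and stZ: "?J Z UNIV < \<infinity>"
    using standing unfolding B_def Z_def by auto
  have tc: "feasible X g UNIV (xs c) (ys c)" "ereal (objective c d UNIV (xs c) (ys c)) = ?J c UNIV"
    using tie_breaking C_profile stC by auto
  have fcK: "feasible X g (UNIV - K) (xs c) (ys c)" using tc(1) losers unfolding feasible_def by auto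
  have "objective c d UNIV (xs c) (ys c) = objective c d (UNIV - K) (xs c) (ys c)"
    by (rule obj_shrink) (use C_profile losers in auto)
  then have "?J c (UNIV - K) \<le> ?J c UNIV" using Jm_le[OF fcK, where P=c and d=d] tc(2) by simp
  moreover have "?J c UNIV \<le> ?J c (UNIV - K)" by (rule Jm_mono[OF C_profile]) auto
  ultimately have JcK: "?J c (UNIV - K) = ?J c UNIV" by simp
  have JBK: "?J B (UNIV - K) = ?J c UNIV"
    using Jm_cong_outside[of K B c X g d] JcK unfolding B_def mixed_def by simp
  have JZK: "?J Z (UNIV - K) = ?J c UNIV"
    using Jm_cong_outside[of K Z c X g d] JcK unfolding Z_def mixed_def by simp
  define x where "x = xs B"
  define y where "y = ys B"
  have tB: "feasible X g UNIV x y" "ereal (objective B d UNIV x y) = ?J B UNIV"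
    using tie_breaking bpB stB unfolding x_def y_def by auto
  have RB: "?R B UNIV = objective B d UNIV x y" using tB(2) unfolding Jr_def by (metis real_of_ereal.simps(1))
  have RC: "?J c UNIV = ereal (?R c UNIV)" using fin[OF C_profile stC] .
  have RZ: "?J Z UNIV = ereal (?R Z UNIV)" using fin[OF bpZ stZ] .
  have RBl: "?J B (UNIV - {l}) = ereal (?R B (UNIV - {l}))" for l using fin[OF bpB stB(2)] .
  have "?J c UNIV \<le> ereal (objective c d UNIV x y)" by (rule Jm_le[OF tB(1), where P=c and d=d])
  then have c1: "?R c UNIV \<le> objective c d UNIV x y" using RC by simp
  have split: "objective P d UNIV x y = (\<Sum>l\<in>K. P l (x l)) + (\<Sum>l\<in>UNIV-K. P l (x l)) + d x y" for P
    unfolding objective_def by (simp add: sum.subset_diff[of K UNIV])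
  have BK: "(\<Sum>l\<in>K. B l (x l)) = (\<Sum>l\<in>K. b l (x l))" unfolding B_def mixed_def by simp
  have BnK: "(\<Sum>l\<in>UNIV-K. B l (x l)) = (\<Sum>l\<in>UNIV-K. c l (x l))" unfolding B_def mixed_def by simp
  have costs: "(\<Sum>l\<in>K. b l (x l) - c l (x l)) \<le> ?R B UNIV - ?R c UNIV"
    using c1 RB split[of B] split[of c] BK BnK by (simp add: sum_subtractf)
  have "?J B (UNIV - K) < \<infinity>" using JBK stC by simp
  then have w: "ereal \<gamma> * (\<Sum>l\<in>K. ?J B (UNIV - {l}) - ?J B UNIV) \<le> ?J B (UNIV - K) - ?J B UNIV"
    using wsm bpB unfolding weak_supermodular_const_def by (metis Diff_UNIV Diff_empty)
  have JBU: "?J B UNIV = ereal (?R B UNIV)" using fin[OF bpB stB(1)] .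
  have "(\<Sum>l\<in>K. ?J B (UNIV - {l}) - ?J B UNIV) = (\<Sum>l\<in>K. ereal (?R B (UNIV - {l}) - ?R B UNIV))"
    using RBl JBU by simp
  also have "\<dots> = ereal (\<Sum>l\<in>K. ?R B (UNIV - {l}) - ?R B UNIV)" by (rule sum_ereal)
  finally have "\<gamma> * (\<Sum>l\<in>K. ?R B (UNIV - {l}) - ?R B UNIV) \<le> ?R c UNIV - ?R B UNIV"
    using w JBK RC JBU by simp
  then have delta: "(\<Sum>l\<in>K. ?R B (UNIV - {l}) - ?R B UNIV) \<le> (1/\<gamma>) * (?R c UNIV - ?R B UNIV)"
    using gamma_pos by (simp add: field_simps)
  have util: "(\<Sum>l\<in>K. vcg_utility X g d xs B c l)
      = (\<Sum>l\<in>K. b l (x l) - c l (x l)) + (\<Sum>l\<in>K. ?R B (UNIV - {l}) - ?R B UNIV)"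
    unfolding vcg_utility_def vcg_payment_def x_def B_def mixed_def
    by (simp add: sum.distrib[symmetric] algebra_simps cong: sum.cong)
  have first: "(\<Sum>l\<in>K. vcg_utility X g d xs B c l) \<le> (1/\<gamma> - 1) * (?R c UNIV - ?R B UNIV)"
    using util costs delta by (simp add: algebra_simps)
  have "objective Z d UNIV x y \<le> objective B d UNIV x y"
  proof -
    have "(\<Sum>l\<in>K. Z l (x l)) \<le> (\<Sum>l\<in>K. B l (x l))"
      using B_bids tB(1) unfolding Z_def B_def mixed_def feasible_def by (auto intro!: sum_nonneg)
    moreover have "(\<Sum>l\<in>UNIV-K. Z l (x l)) = (\<Sum>l\<in>UNIV-K. B l (x l))"
      unfolding Z_def B_def mixed_def by simp
    ultimately show ?thesis using split[of Z] split[of B] by simp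
  qed
  then have "?J Z UNIV \<le> ereal (objective B d UNIV x y)"
    using Jm_le[OF tB(1), where P=Z and d=d] order_trans ereal_less_eq(3) by blast
  then have ZB: "?R Z UNIV \<le> ?R B UNIV" using RZ RB by simp
  have "?J B UNIV \<le> ?J B (UNIV - K)" by (rule Jm_mono[OF bpB]) auto
  then have BC: "?R B UNIV \<le> ?R c UNIV" using JBK JBU RC by simp
  have "?J Z UNIV \<le> ?J Z (UNIV - K)" by (rule Jm_mono[OF bpZ]) auto
  then have ZC: "?R Z UNIV \<le> ?R c UNIV" using JZK RZ RC by simp
  have second: "(1/\<gamma> - 1) * (?R c UNIV - ?R B UNIV) \<le> (1/\<gamma> - 1) * (?R c UNIV - ?R Z UNIV)"
  proof (cases "\<gamma> \<le> 1")
    case True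
    then have "0 \<le> 1/\<gamma> - 1" using gamma_pos by (simp add: field_simps)
    then show ?thesis using ZB by (intro mult_left_mono) auto
  next
    case False
    \<comment> \<open>all marginal contributions vanish, so J(Z) = J(C)\<close>
    have chain: "?J Z (UNIV - K') = ?J Z UNIV" if "K' \<subseteq> K" for K'
    proof -
      have "finite K'" by simp
      then show ?thesis using that
      proof (induction K' rule: finite_induct)
        case empty then show ?case by simp
      next
        case (insert k K')
        let ?S = "UNIV - K'"
        have eq: "?S - {k} = UNIV - insert k K'" by auto
        have "?J Z (UNIV - insert k K') \<le> ?J Z (UNIV - K)"
          by (rule Jm_mono[OF bpZ]) (use insert in auto)
        then have "?J Z (?S - {k}) \<le> ?J c UNIV" using JZK eq by simp
        then have f1: "?J Z (?S - {k}) < \<infinity>" using stC by (rule le_less_trans)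
        have IH: "?J Z ?S = ?J Z UNIV" using insert by auto
        have f2: "?J Z ?S < \<infinity>" using IH stZ by simp
        have "ereal \<gamma> * (\<Sum>l\<in>{k}. ?J Z (?S - {l}) - ?J Z ?S) \<le> ?J Z (?S - {k}) - ?J Z ?S"
          using wsm bpZ f1 unfolding weak_supermodular_const_def by blast
        then have w1: "ereal \<gamma> * (?J Z (?S - {k}) - ?J Z ?S) \<le> ?J Z (?S - {k}) - ?J Z ?S" by simp
        have m: "?J Z ?S \<le> ?J Z (?S - {k})" by (rule Jm_mono[OF bpZ]) auto
        have e1: "?J Z (?S - {k}) = ereal (?R Z (?S - {k}))" using fin[OF bpZ f1] .
        have e2: "?J Z ?S = ereal (?R Z ?S)" using fin[OF bpZ f2] .
        have "\<gamma> * (?R Z (?S - {k}) - ?R Z ?S) \<le> ?R Z (?S - {k}) - ?R Z ?S"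
          using w1 e1 e2 by simp
        moreover have "?R Z ?S \<le> ?R Z (?S - {k})" using m e1 e2 by simp
        ultimately have "?R Z (?S - {k}) = ?R Z ?S"
        proof -
          assume a1: "\<gamma> * (?R Z (?S - {k}) - ?R Z ?S) \<le> ?R Z (?S - {k}) - ?R Z ?S"
            and a2: "?R Z ?S \<le> ?R Z (?S - {k})"
          have "(\<gamma> - 1) * (?R Z (?S - {k}) - ?R Z ?S) \<le> 0" using a1 by (simp add: algebra_simps)
          then have "?R Z (?S - {k}) - ?R Z ?S \<le> 0" using False by (simp add: mult_le_0_iff)
          then show ?thesis using a2 by simp
        qed
        then show ?case using e1 e2 IH eq by simp
      qed
    qed
    have "?J Z UNIV = ?J c UNIV" using chain[of K] JZK by simp
    then have "?R Z UNIV = ?R c UNIV" using RZ RC by simp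
    then have "?R B UNIV = ?R c UNIV" using ZB BC by simp
    then show ?thesis using \<open>?R Z UNIV = ?R c UNIV\<close> by simp
  qed
  show ?thesis using first second unfolding B_def Z_def by simp
qed

end
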